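(* In the multi-period single-sector model described in the context, for $n+m \le N_{t_k}$, \begin{displaymath} \mathbb{P}\left(D_{t_{k+1}} - D_{t_k} = n \mid I_{t_{k}} = m; N_{t_k}\right) = \tilde{P}\left(n; N_{t_k} - m, \eta_S + m \eta_{FS}, \eta_{FS}, \eta_{F}\right), \end{displaymath} where $\tilde{P}(n;N,\eta_S,\eta_{FS},\eta_F) := \mathbb{P}\left(\sum_{i=1}^N X_i=n\right) = \frac{1}{Z_1}\binom{N}{n}\left[e^{n\eta_F} + e^{\eta_S + n\eta_F + n\eta_{FS}}\right]$ is the loss distribution of the one-period single-sector model with $N$ firms and parameters $(\eta_S,\eta_{FS},\eta_F)$, and $Z_{N,\eta_S,\eta_{FS},\eta_F}:=Z_1 = (1+e^{\eta_F})^N + e^{\eta_S}(1+e^{\eta_F+\eta_{FS}})^N$ is its normalization constant.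
   Context: One-period single-sector model: for $N$ firms with default indicators $X_1,\dots,X_N\in\{0,1\}$ and real parameters $\eta_S,\eta_{FS},\eta_F$ (obtained by summing out one binary sector node connected to all firms in an Ising-type graphical model), $\mathbb{P}(X_1=x_1,\dots,X_N=x_N) = \frac{1}{Z_1}\left(e^{\eta_F\sum_i x_i} + e^{\eta_S + (\eta_{FS}+\eta_F)\sum_i x_i}\right)$ with $Z_1=(1+e^{\eta_F})^N + e^{\eta_S}(1+e^{\eta_F+\eta_{FS}})^N$. Multi-period construction: start with a single-sector graph with $N$ firms at payment dates $t_0=0<t_1<\dots$. Let $D_{t_k}$ be the number of firms defaulted up to $t_k$ and $N_{t_k}$ the number of firms remaining in the system, with $D_0=0$, $N_0=N$. At the beginning of each period each defaulted node still in the system is removed independently with probability $p_R$. The number of firms currently in default and still in the system is $I_{t_k} = D_{t_k} + N_{t_k} - N$. The number of additional defaults in $(t_k,t_{k+1})$ is defined by conditioning the one-period single-sector distribution on $N_{t_k}$ firms, with the $m$ in-default firms labelled $1,\dots,m$: $\mathbb{P}(D_{t_{k+1}} - D_{t_k} = n \mid I_{t_k} = m; N_{t_k}) := \sum_{i_1,\dots,i_n \in \{m+1,\dots,N_{t_k}\}} \mathbb{P}(X_{i_1}=\dots=X_{i_n}=1, X_{i_{n+1}}=\dots=X_{i_{N_{t_k}}}=0 \mid X_1=\dots=X_m=1)$, for $n+m\le N_{t_k}$ (the sum running over choices of the $n$ newly defaulting firms among the $N_{t_k}-m$ non-defaulted ones, the remaining ones surviving). *)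

theory Defs
  imports Complex_Main "HOL-Library.FuncSet"
begin

text \<open>A configuration is a function x assigning to each firm i in {1..N} its
  default indicator x i in {0,1} (and the default value undefined elsewhere).\<close>

definition configs :: "nat \<Rightarrow> (nat \<Rightarrow> nat) set" where
  "configs N = {1..N} \<rightarrow>\<^sub>E {0, 1}"

definition Z1 :: "nat \<Rightarrow> real \<Rightarrow> real \<Rightarrow> real \<Rightarrow> real" where
  "Z1 N eS eFS eF = (1 + exp eF) ^ N + exp eS * (1 + exp (eF + eFS)) ^ N"

definition joint :: "nat \<Rightarrow> real \<Rightarrow> real \<Rightarrow> real \<Rightarrow> (nat \<Rightarrow> nat) \<Rightarrow> real" where
  "joint N eS eFS eF x =
     (exp (eF * real (\<Sum>i=1..N. x i)) + exp (eS + (eFS + eF) * real (\<Sum>i=1..N. x i)))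
     / Z1 N eS eFS eF"

definition probE :: "nat \<Rightarrow> real \<Rightarrow> real \<Rightarrow> real \<Rightarrow> (nat \<Rightarrow> nat) set \<Rightarrow> real" where
  "probE N eS eFS eF E = (\<Sum>x\<in>configs N \<inter> E. joint N eS eFS eF x)"

definition condP :: "nat \<Rightarrow> real \<Rightarrow> real \<Rightarrow> real \<Rightarrow> (nat \<Rightarrow> nat) set \<Rightarrow> (nat \<Rightarrow> nat) set \<Rightarrow> real" where
  "condP N eS eFS eF A B = probE N eS eFS eF (A \<inter> B) / probE N eS eFS eF B"

definition Ptilde :: "nat \<Rightarrow> nat \<Rightarrow> real \<Rightarrow> real \<Rightarrow> real \<Rightarrow> real" where
  "Ptilde n N eS eFS eF = probE N eS eFS eF {x. (\<Sum>i=1..N. x i) = n}"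

text \<open>P(D_{t_{k+1}} - D_{t_k} = n | I_{t_k} = m; N_{t_k}), with Nt = N_{t_k}:
  sum over the sets S of n newly defaulting firms among {m+1..Nt} of
  P(X_i = 1 for i in S, X_i = 0 for i in {m+1..Nt} - S | X_1 = ... = X_m = 1).\<close>
definition new_defaults_prob :: "nat \<Rightarrow> real \<Rightarrow> real \<Rightarrow> real \<Rightarrow> nat \<Rightarrow> nat \<Rightarrow> real" where
  "new_defaults_prob Nt eS eFS eF m n =
     (\<Sum>S\<in>{S. S \<subseteq> {m+1..Nt} \<and> card S = n}.
        condP Nt eS eFS eF
          {x. (\<forall>i\<in>S. x i = 1) \<and> (\<forall>i\<in>{m+1..Nt} - S. x i = 0)}
          {x. \<forall>i\<in>{1..m}. x i = 1})"

end

theory Submission imports Defs begin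
definition indS :: "nat set \<Rightarrow> nat set \<Rightarrow> nat \<Rightarrow> nat" where
  "indS A S = (\<lambda>i. if i \<in> A then (if i \<in> S then 1 else 0) else undefined)"

lemma sum_configs:
  assumes "finite A"
  shows "(\<Sum>x\<in>A \<rightarrow>\<^sub>E {0::nat,1}. g x) = (\<Sum>S\<in>Pow A. g (indS A S))"
proof (rule sum.reindex_bij_witness[where i="indS A" and j="\<lambda>x. {i\<in>A. x i = 1}"])
  fix x assume x: "x \<in> A \<rightarrow>\<^sub>E {0::nat,1}"
  show "indS A {i\<in>A. x i = 1} = x"
  proof
    fix i show "indS A {i\<in>A. x i = 1} i = x i"
      using x by (auto simp: indS_def PiE_def extensional_def Pi_def)
  qed
  show "{i\<in>A. x i = 1} \<in> Pow A" by auto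
  show "g (indS A {i\<in>A. x i = 1}) = g x" using \<open>indS A {i\<in>A. x i = 1} = x\<close> by simp
next
  fix S assume "S \<in> Pow A"
  then show "{i \<in> A. indS A S i = 1} = S" by (auto simp: indS_def)
  show "indS A S \<in> A \<rightarrow>\<^sub>E {0,1}" by (auto simp: indS_def PiE_def extensional_def)
qed

lemma sum_indS:
  assumes "finite A" "S \<subseteq> A"
  shows "(\<Sum>i\<in>A. indS A S i) = card S"
proof -
  have "(\<Sum>i\<in>A. indS A S i) = (\<Sum>i\<in>A. if i \<in> S then 1 else 0)"
    by (rule sum.cong) (auto simp: indS_def)
  also have "\<dots> = card (A \<inter> S)" using assms(1) by (simp add: sum.If_cases)
  also have "A \<inter> S = S" using assms(2) by auto
  finally show ?thesis .
qed

lemma sum_pow_card: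
  assumes "finite A"
  shows "(\<Sum>S\<in>Pow A. f (card S)) = (\<Sum>k\<le>card A. real (card A choose k) * (f k :: real))"
proof -
  have "(\<Sum>S\<in>Pow A. f (card S)) = (\<Sum>S\<in>Pow A. \<Sum>k\<le>card A. if card S = k then f k else 0)"
  proof (rule sum.cong)
    fix S assume "S \<in> Pow A"
    then have "card S \<le> card A" using assms by (simp add: card_mono)
    then show "f (card S) = (\<Sum>k\<le>card A. if card S = k then f k else 0)"
      by (simp add: sum.delta)
  qed simp
  also have "\<dots> = (\<Sum>k\<le>card A. \<Sum>S\<in>Pow A. if card S = k then f k else 0)"
    by (rule sum.swap)
  also have "\<dots> = (\<Sum>k\<le>card A. real (card A choose k) * f k)"
  proof (rule sum.cong)
    fix k
    have eq: "Pow A \<inter> {S. card S = k} = {S. S \<subseteq> A \<and> card S = k}" by auto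
    show "(\<Sum>S\<in>Pow A. if card S = k then f k else 0) = real (card A choose k) * f k"
      using assms by (simp add: sum.If_cases eq n_subsets)
  qed simp
  finally show ?thesis .
qed


definition Jn :: "nat \<Rightarrow> real \<Rightarrow> real \<Rightarrow> real \<Rightarrow> nat \<Rightarrow> real" where
  "Jn N eS eFS eF k = (exp (eF * real k) + exp (eS + (eFS + eF) * real k)) / Z1 N eS eFS eF"

lemma probE_pow:
  "probE N eS eFS eF E = (\<Sum>T\<in>Pow {1..N}. if indS {1..N} T \<in> E then Jn N eS eFS eF (card T) else 0)"
proof -
  have "probE N eS eFS eF E = (\<Sum>x\<in>configs N. if x \<in> E then joint N eS eFS eF x else 0)"
    unfolding probE_def configs_def by (rule sum.inter_restrict) (simp add: finite_PiE)
  also have "\<dots> = (\<Sum>T\<in>Pow {1..N}. if indS {1..N} T \<in> E then joint N eS eFS eF (indS {1..N} T) else 0)"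
    unfolding configs_def by (rule sum_configs) simp
  also have "\<dots> = (\<Sum>T\<in>Pow {1..N}. if indS {1..N} T \<in> E then Jn N eS eFS eF (card T) else 0)"
  proof (rule sum.cong)
    fix T assume "T \<in> Pow {1..N}"
    then have "(\<Sum>i=1..N. indS {1..N} T i) = card T" by (intro sum_indS) auto
    then show "(if indS {1..N} T \<in> E then joint N eS eFS eF (indS {1..N} T) else 0) =
          (if indS {1..N} T \<in> E then Jn N eS eFS eF (card T) else 0)"
      by (simp add: joint_def Jn_def)
  qed simp
  finally show ?thesis .
qed

lemma Z1_pos: "Z1 N eS eFS eF > 0"
proof -
  have "\<And>x. 0 < 1 + exp (x::real)" by (simp add: add_pos_pos)
  then show ?thesis unfolding Z1_def by (intro add_pos_pos mult_pos_pos zero_less_power) auto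
qed

lemma Z1_binom:
  "(\<Sum>k\<le>N. real (N choose k) * (exp (eF * real k) + exp (eS + (eFS + eF) * real k))) = Z1 N eS eFS eF"
proof -
  have "(\<Sum>k\<le>N. real (N choose k) * (exp (eF * real k) + exp (eS + (eFS + eF) * real k)))
     = (\<Sum>k\<le>N. real (N choose k) * exp eF ^ k * 1 ^ (N - k))
       + exp eS * (\<Sum>k\<le>N. real (N choose k) * exp (eF + eFS) ^ k * 1 ^ (N - k))"
    by (simp add: sum.distrib sum_distrib_left algebra_simps exp_add flip: exp_of_nat_mult)
  also have "\<dots> = Z1 N eS eFS eF"
    unfolding Z1_def using binomial_ring[of "exp eF" 1 N] binomial_ring[of "exp (eF + eFS)" 1 N]
    by (simp add: add.commute)
  finally show ?thesis .
qed

lemma Ptilde_eq: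
  assumes "n \<le> N"
  shows "Ptilde n N eS eFS eF = real (N choose n) * Jn N eS eFS eF n"
proof -
  have "Ptilde n N eS eFS eF = (\<Sum>T\<in>Pow {1..N}. (\<lambda>k. if k = n then Jn N eS eFS eF k else 0) (card T))"
    unfolding Ptilde_def probE_pow
  proof (rule sum.cong)
    fix T assume "T \<in> Pow {1..N}"
    then have "(\<Sum>i=1..N. indS {1..N} T i) = card T" by (intro sum_indS) auto
    then show "(if indS {1..N} T \<in> {x. (\<Sum>i = 1..N. x i) = n} then Jn N eS eFS eF (card T) else 0) =
         (\<lambda>k. if k = n then Jn N eS eFS eF k else 0) (card T)" by simp
  qed simp
  also have "\<dots> = (\<Sum>k\<le>N. real (N choose k) * (if k = n then Jn N eS eFS eF k else 0))"
    using sum_pow_card[of "{1..N}"] by simp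
  also have "\<dots> = real (N choose n) * Jn N eS eFS eF n"
    using assms by (simp add: sum.delta if_distrib cong: if_cong)
  finally show ?thesis .
qed


lemma indS_1: "i \<in> A \<Longrightarrow> indS A T i = 1 \<longleftrightarrow> i \<in> T"
  by (simp add: indS_def)
lemma indS_0: "i \<in> A \<Longrightarrow> indS A T i = 0 \<longleftrightarrow> i \<notin> T"
  by (simp add: indS_def)

lemma probE_B:
  assumes "m \<le> Nt"
  shows "probE Nt eS eFS eF {x. \<forall>i\<in>{1..m}. x i = 1}
     = (\<Sum>k\<le>Nt - m. real (Nt - m choose k) * Jn Nt eS eFS eF (m + k))"
proof -
  let ?J = "Jn Nt eS eFS eF"
  have "probE Nt eS eFS eF {x. \<forall>i\<in>{1..m}. x i = 1}
      = (\<Sum>T\<in>Pow {1..Nt}. if {1..m} \<subseteq> T then ?J (card T) else 0)"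
    unfolding probE_pow
  proof (rule sum.cong)
    fix T assume T: "T \<in> Pow {1..Nt}"
    have "indS {1..Nt} T \<in> {x. \<forall>i\<in>{1..m}. x i = 1} \<longleftrightarrow> {1..m} \<subseteq> T"
    proof
      assume h: "indS {1..Nt} T \<in> {x. \<forall>i\<in>{1..m}. x i = 1}"
      show "{1..m} \<subseteq> T"
      proof
        fix i assume i: "i \<in> {1..m}"
        then have "indS {1..Nt} T i = 1" using h by blast
        moreover have "i \<in> {1..Nt}" using i assms by auto
        ultimately show "i \<in> T" using indS_1 by blast
      qed
    next
      assume h: "{1..m} \<subseteq> T"
      show "indS {1..Nt} T \<in> {x. \<forall>i\<in>{1..m}. x i = 1}"
      proof (intro CollectI ballI)
        fix i assume i: "i \<in> {1..m}"
        then have "i \<in> {1..Nt}" "i \<in> T" using h assms by auto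
        then show "indS {1..Nt} T i = 1" using indS_1 by blast
      qed
    qed
    then show "(if indS {1..Nt} T \<in> {x. \<forall>i\<in>{1..m}. x i = 1} then ?J (card T) else 0) =
          (if {1..m} \<subseteq> T then ?J (card T) else 0)" by simp
  qed simp
  also have "\<dots> = (\<Sum>T\<in>{T\<in>Pow {1..Nt}. {1..m} \<subseteq> T}. ?J (card T))"
    by (rule sum.inter_filter[symmetric]) simp
  also have "\<dots> = (\<Sum>U\<in>Pow {m+1..Nt}. ?J (m + card U))"
  proof (rule sum.reindex_bij_witness[where i="\<lambda>U. {1..m} \<union> U" and j="\<lambda>T. T - {1..m}"])
    fix T assume "T \<in> {T\<in>Pow {1..Nt}. {1..m} \<subseteq> T}"
    then have T: "T \<subseteq> {1..Nt}" "{1..m} \<subseteq> T" by auto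
    then show "{1..m} \<union> (T - {1..m}) = T" "T - {1..m} \<in> Pow {m+1..Nt}" by auto
    have fT: "finite (T - {1..m})" using T(1) by (meson finite_atLeastAtMost finite_subset Diff_subset subset_trans)
    have "card ({1..m} \<union> (T - {1..m})) = m + card (T - {1..m})"
      by (subst card_Un_disjoint) (use fT in auto)
    then show "?J (m + card (T - {1..m})) = ?J (card T)"
      using \<open>{1..m} \<union> (T - {1..m}) = T\<close> by simp
  next
    fix U assume "U \<in> Pow {m+1..Nt}"
    then show "{1..m} \<union> U - {1..m} = U" "{1..m} \<union> U \<in> {T\<in>Pow {1..Nt}. {1..m} \<subseteq> T}"
      using assms by auto
  qed
  also have "\<dots> = (\<Sum>k\<le>Nt - m. real (Nt - m choose k) * ?J (m + k))"
    using sum_pow_card[of "{m+1..Nt}" "\<lambda>k. ?J (m + k)"] by simp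
  finally show ?thesis .
qed


lemma probE_AB:
  assumes "m \<le> Nt" "S \<subseteq> {m+1..Nt}"
  shows "probE Nt eS eFS eF ({x. (\<forall>i\<in>S. x i = 1) \<and> (\<forall>i\<in>{m+1..Nt} - S. x i = 0)} \<inter> {x. \<forall>i\<in>{1..m}. x i = 1})
     = Jn Nt eS eFS eF (m + card S)"
proof -
  let ?J = "Jn Nt eS eFS eF"
  let ?E = "{x. (\<forall>i\<in>S. x i = 1) \<and> (\<forall>i\<in>{m+1..Nt} - S. x i = 0)} \<inter> {x. \<forall>i\<in>{1..m}. x i = (1::nat)}"
  have fS: "finite S" using assms(2) finite_subset by blast
  have key: "indS {1..Nt} T \<in> ?E \<longleftrightarrow> T = {1..m} \<union> S" if T: "T \<subseteq> {1..Nt}" for T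
  proof
    assume h: "indS {1..Nt} T \<in> ?E"
    show "T = {1..m} \<union> S"
    proof (intro equalityI subsetI)
      fix i assume iT: "i \<in> T"
      then have i: "i \<in> {1..Nt}" using T by blast
      show "i \<in> {1..m} \<union> S"
      proof (rule ccontr)
        assume "i \<notin> {1..m} \<union> S"
        then have "i \<in> {m+1..Nt} - S" using i by auto
        then have "indS {1..Nt} T i = 0" using h by blast
        then show False using indS_0[OF i, of T] iT by blast
      qed
    next
      fix i assume i: "i \<in> {1..m} \<union> S"
      then have "indS {1..Nt} T i = 1" using h by blast
      moreover have "i \<in> {1..Nt}" using i assms by auto
      ultimately show "i \<in> T" using indS_1 by blast
    qed
  next
    assume hT: "T = {1..m} \<union> S"
    have a: "indS {1..Nt} T i = 1" if "i \<in> S" for i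
    proof -
      have "i \<in> {1..Nt}" using that assms(2) by auto
      moreover have "i \<in> T" using that hT by blast
      ultimately show ?thesis using indS_1 by blast
    qed
    have b: "indS {1..Nt} T i = 0" if "i \<in> {m+1..Nt} - S" for i
    proof -
      have "i \<in> {1..Nt}" using that by auto
      moreover have "i \<notin> T" using that hT by auto
      ultimately show ?thesis using indS_0 by blast
    qed
    have c: "indS {1..Nt} T i = 1" if "i \<in> {1..m}" for i
    proof -
      have "i \<in> {1..Nt}" using that assms(1) by auto
      moreover have "i \<in> T" using that hT by blast
      ultimately show ?thesis using indS_1 by blast
    qed
    show "indS {1..Nt} T \<in> ?E"
      using a b c by blast
  qed
  have "probE Nt eS eFS eF ?E = (\<Sum>T\<in>Pow {1..Nt}. if T = {1..m} \<union> S then ?J (card T) else 0)"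
    unfolding probE_pow
  proof (rule sum.cong)
    fix T assume "T \<in> Pow {1..Nt}"
    then have TT: "T \<subseteq> {1..Nt}" by simp
    show "(if indS {1..Nt} T \<in> ?E then ?J (card T) else 0) =
      (if T = {1..m} \<union> S then ?J (card T) else 0)" by (simp only: key[OF TT])
  qed simp
  also have "\<dots> = ?J (card ({1..m} \<union> S))"
  proof -
    have "{1..m} \<union> S \<in> Pow {1..Nt}" using assms by auto
    then show ?thesis by (simp add: sum.delta')
  qed
  also have "card ({1..m} \<union> S) = m + card S"
    using assms fS by (subst card_Un_disjoint) auto
  finally show ?thesis .
qed

theorem proposition3:
  fixes Nt m n :: nat and eS eFS eF :: real
  assumes "n + m \<le> Nt"
  shows "new_defaults_prob Nt eS eFS eF m n
           = Ptilde n (Nt - m) (eS + real m * eFS) eFS eF"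
proof -
  let ?N = "Nt - m"
  let ?eS' = "eS + real m * eFS"
  define b where "b k = exp (eF * real k) + exp (?eS' + (eFS + eF) * real k)" for k
  define Z where "Z = Z1 Nt eS eFS eF"
  have Zp: "Z > 0" unfolding Z_def by (rule Z1_pos)
  have Z'p: "Z1 ?N ?eS' eFS eF > 0" by (rule Z1_pos)
  have mN: "m \<le> Nt" using assms by simp
  have Jm: "Jn Nt eS eFS eF (m + k) = exp (eF * real m) * b k / Z" for k
    unfolding Jn_def b_def Z_def
    by (simp add: algebra_simps flip: exp_add)
  have PB: "probE Nt eS eFS eF {x. \<forall>i\<in>{1..m}. x i = 1} = exp (eF * real m) * Z1 ?N ?eS' eFS eF / Z"
  proof -
    have "probE Nt eS eFS eF {x. \<forall>i\<in>{1..m}. x i = 1}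
        = (\<Sum>k\<le>?N. real (?N choose k) * b k) * exp (eF * real m) / Z"
      unfolding probE_B[OF mN] Jm by (simp add: sum_distrib_left sum_divide_distrib algebra_simps)
    also have "(\<Sum>k\<le>?N. real (?N choose k) * b k) = Z1 ?N ?eS' eFS eF"
      unfolding b_def by (rule Z1_binom)
    finally show ?thesis by simp
  qed
  have "new_defaults_prob Nt eS eFS eF m n
      = (\<Sum>S\<in>{S. S \<subseteq> {m+1..Nt} \<and> card S = n}. Jn Nt eS eFS eF (m + n) / (exp (eF * real m) * Z1 ?N ?eS' eFS eF / Z))"
    unfolding new_defaults_prob_def condP_def
  proof (rule sum.cong)
    fix S assume "S \<in> {S. S \<subseteq> {m+1..Nt} \<and> card S = n}"
    then have S: "S \<subseteq> {m+1..Nt}" "card S = n" by auto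
    show "probE Nt eS eFS eF
          ({x. (\<forall>i\<in>S. x i = 1) \<and> (\<forall>i\<in>{m + 1..Nt} - S. x i = 0)} \<inter> {x. \<forall>i\<in>{1..m}. x i = 1}) /
         probE Nt eS eFS eF {x. \<forall>i\<in>{1..m}. x i = 1} =
         Jn Nt eS eFS eF (m + n) / (exp (eF * real m) * Z1 ?N ?eS' eFS eF / Z)"
      unfolding probE_AB[OF mN S(1)] PB S(2) ..
  qed simp
  also have "\<dots> = real (?N choose n) * (b n / Z1 ?N ?eS' eFS eF)"
    using Zp Z'p by (simp add: n_subsets Jm)
  also have "\<dots> = Ptilde n ?N ?eS' eFS eF"
    using assms by (simp add: Ptilde_eq Jn_def b_def)
  finally show ?thesis .
qed

end
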